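(* Let $\alpha\in\mathbb{F}_q^*$, let $1\le k\le n$, and let $\mathscr{C}\subseteq\mathbb{F}_q^n$ be a linear code of dimension $n-k$. Then $\mathscr{C}$ is a skew $\alpha$-cyclic code if and only if $\mathscr{C}$ has a parity check matrix of the form $$[\,{}^tP,\ {}^t(P\tau),\ {}^t(P\tau^2),\ \dots,\ {}^t(P\tau^{n-1})\,]$$ for some $P\in\mathbb{F}_q^k$ and some semi-linear map $\tau=\Theta\circ T$ with $T\in GL(k,q)$, such that $P\tau^n=\alpha P$.
   Context: Let $\mathbb{F}_q$ be a finite field and $\theta$ a field automorphism of $\mathbb{F}_q$. A linear code $\mathscr{C}\subseteq\mathbb{F}_q^n$ is skew $\alpha$-cyclic if it is invariant under $(c_0,\dots,c_{n-1})\mapsto(\alpha\theta(c_{n-1}),\theta(c_0),\dots,\theta(c_{n-2}))$. Vectors are row vectors and ${}^tv$ denotes the transpose. For $P\in\mathbb{F}_q^k$ and $T\in GL(k,q)$, the semi-linear map $\tau=\Theta\circ T$ acts on the right by $P\tau:=\Theta(P)T$, where $\Theta(P)$ applies $\theta$ to each coordinate; $\tau^i$ is the $i$-fold iterate. A parity check matrix of an $[n,n-k]$-code $\mathscr{C}$ is a $k\times n$ matrix $H$ of rank $k$ with $\mathscr{C}=\{\vec c\in\mathbb{F}_q^n:\vec c\,{}^tH=0\}$. *)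

theory Defs
  imports "Jordan_Normal_Form.DL_Rank" "Jordan_Normal_Form.Matrix_Kernel"
begin

definition field_automorphism :: "('a::field \<Rightarrow> 'a) \<Rightarrow> bool" where
  "field_automorphism \<theta> \<longleftrightarrow> bij \<theta> \<and> \<theta> 1 = 1 \<and>
     (\<forall>x y. \<theta> (x + y) = \<theta> x + \<theta> y) \<and> (\<forall>x y. \<theta> (x * y) = \<theta> x * \<theta> y)"

definition skew_shift :: "('a::field \<Rightarrow> 'a) \<Rightarrow> 'a \<Rightarrow> nat \<Rightarrow> 'a vec \<Rightarrow> 'a vec" where
  "skew_shift \<theta> \<alpha> n c = vec n (\<lambda>i. if i = 0 then \<alpha> * \<theta> (c $ (n - 1)) else \<theta> (c $ (i - 1)))"

definition skew_cyclic :: "('a::field \<Rightarrow> 'a) \<Rightarrow> 'a \<Rightarrow> nat \<Rightarrow> 'a vec set \<Rightarrow> bool" where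
  "skew_cyclic \<theta> \<alpha> n C \<longleftrightarrow> (\<forall>c\<in>C. skew_shift \<theta> \<alpha> n c \<in> C)"

definition linear_code :: "nat \<Rightarrow> 'a::field vec set \<Rightarrow> bool" where
  "linear_code n C \<longleftrightarrow> subspace class_ring C (module_vec TYPE('a) n)"

definition code_dim :: "nat \<Rightarrow> 'a::field vec set \<Rightarrow> nat" where
  "code_dim n C = vectorspace.dim class_ring ((module_vec TYPE('a) n)\<lparr>carrier := C\<rparr>)"

text \<open>Semi-linear map tau = Theta o T acting on row vectors: P tau = Theta(P) T.\<close>
definition semilin :: "('a::field \<Rightarrow> 'a) \<Rightarrow> 'a mat \<Rightarrow> 'a vec \<Rightarrow> 'a vec" where
  "semilin \<theta> T P = vec (dim_vec P) (\<lambda>j. \<Sum>i<dim_vec P. \<theta> (P $ i) * T $$ (i, j))"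

definition parity_check_matrix :: "nat \<Rightarrow> nat \<Rightarrow> 'a::field mat \<Rightarrow> 'a vec set \<Rightarrow> bool" where
  "parity_check_matrix k n H C \<longleftrightarrow> H \<in> carrier_mat k n \<and> vec_space.rank k H = k \<and>
     C = {c \<in> carrier_vec n. H *\<^sub>v c = 0\<^sub>v k}"

definition orbit_matrix :: "nat \<Rightarrow> nat \<Rightarrow> ('a vec \<Rightarrow> 'a vec) \<Rightarrow> 'a vec \<Rightarrow> 'a mat" where
  "orbit_matrix k n \<tau> P = mat_of_cols k (map (\<lambda>j. (\<tau> ^^ j) P) [0..<n])"

end

theory Submission
  imports Defs
begin


lemma fa_0: "field_automorphism \<theta> \<Longrightarrow> \<theta> 0 = 0"
  unfolding field_automorphism_def by (metis add_cancel_right_right add_0)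

lemma fa_add: "field_automorphism \<theta> \<Longrightarrow> \<theta> (x + y) = \<theta> x + \<theta> y"
  unfolding field_automorphism_def by blast

lemma fa_mult: "field_automorphism \<theta> \<Longrightarrow> \<theta> (x * y) = \<theta> x * \<theta> y"
  unfolding field_automorphism_def by blast

lemma fa_1: "field_automorphism \<theta> \<Longrightarrow> \<theta> 1 = 1"
  unfolding field_automorphism_def by blast

lemma fa_bij: "field_automorphism \<theta> \<Longrightarrow> bij \<theta>"
  unfolding field_automorphism_def by blast

lemma fa_minus: "field_automorphism \<theta> \<Longrightarrow> \<theta> (x - y) = \<theta> x - \<theta> y"
proof -
  assume a: "field_automorphism \<theta>"
  have "\<theta> (x - y) + \<theta> y = \<theta> x" using fa_add[OF a, of "x - y" y] by simp
  thus ?thesis by (simp add: eq_diff_eq)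
qed

lemma fa_sum: "field_automorphism \<theta> \<Longrightarrow> \<theta> (sum f A) = (\<Sum>i\<in>A. \<theta> (f i))"
proof -
  assume a: "field_automorphism \<theta>"
  show ?thesis
  proof (cases "finite A")
    case True thus ?thesis
      by (induction A rule: finite_induct) (auto simp: fa_0[OF a] fa_add[OF a])
  qed (simp add: fa_0[OF a])
qed

lemma mv_index:
  assumes "H \<in> carrier_mat k n" "v \<in> carrier_vec n" "i < k"
  shows "(H *\<^sub>v v) $ i = (\<Sum>l<n. H $$ (i, l) * v $ l)"
  using assms by (auto simp: scalar_prod_def atLeast0LessThan intro!: sum.cong)

lemma semilin_dim[simp]: "dim_vec (semilin \<theta> T P) = dim_vec P"
  by (simp add: semilin_def)

lemma semilin_index: "j < dim_vec P \<Longrightarrow> semilin \<theta> T P $ j = (\<Sum>i<dim_vec P. \<theta> (P $ i) * T $$ (i, j))"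
  by (simp add: semilin_def)

lemma semilin_pow_dim[simp]: "dim_vec ((semilin \<theta> T ^^ j) P) = dim_vec P"
  by (induction j) auto

lemma skew_shift_index: "l < n \<Longrightarrow> skew_shift \<theta> \<alpha> n c $ l = (if l = 0 then \<alpha> * \<theta> (c $ (n - 1)) else \<theta> (c $ (l - 1)))"
  by (simp add: skew_shift_def)

lemma skew_shift_carrier[simp]: "skew_shift \<theta> \<alpha> n c \<in> carrier_vec n"
  by (simp add: skew_shift_def)

lemma bwd:
  fixes \<theta> :: "'a::field \<Rightarrow> 'a"
  assumes fa: "field_automorphism \<theta>" and P: "P \<in> carrier_vec k"
    and n: "n \<ge> 1"
    and Pn: "((semilin \<theta> T) ^^ n) P = \<alpha> \<cdot>\<^sub>v P"
    and C: "C = {c \<in> carrier_vec n. orbit_matrix k n (semilin \<theta> T) P *\<^sub>v c = 0\<^sub>v k}"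
  shows "skew_cyclic \<theta> \<alpha> n C"
  unfolding skew_cyclic_def
proof
  fix c assume "c \<in> C"
  define Q where "Q j = ((semilin \<theta> T) ^^ j) P" for j
  define H where "H = orbit_matrix k n (semilin \<theta> T) P"
  have dQ: "Q j \<in> carrier_vec k" for j using P unfolding Q_def by (intro carrier_vecI) (simp add: carrier_vecD)
  have H: "H \<in> carrier_mat k n" unfolding H_def orbit_matrix_def by (metis mat_of_cols_carrier(1) length_map length_upt diff_zero)
  have Hij: "H $$ (i, j) = Q j $ i" if "i < k" "j < n" for i j
    using that by (simp add: H_def orbit_matrix_def mat_of_cols_index Q_def)
  have Qs: "Q (Suc j) $ m = (\<Sum>i<k. \<theta> (Q j $ i) * T $$ (i, m))" if "m < k" for j m
    using that dQ[of j] P unfolding Q_def by (subst funpow.simps(2), subst o_apply, subst semilin_index) (auto simp: carrier_vecD)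
  have c: "c \<in> carrier_vec n" and Hc: "H *\<^sub>v c = 0\<^sub>v k" using \<open>c \<in> C\<close> C H_def by auto
  have Hc0: "(\<Sum>l<n. Q l $ i * c $ l) = 0" if "i < k" for i
    using mv_index[OF H c that] Hc that by (simp add: Hij)
  obtain n' where n': "n = Suc n'" using n by (cases n) auto
  have Qn: "Q n $ m = \<alpha> * Q 0 $ m" if "m < k" for m
    using Pn P that by (simp add: Q_def)
  have "(H *\<^sub>v skew_shift \<theta> \<alpha> n c) $ m = 0" if m: "m < k" for m
  proof -
    have "(H *\<^sub>v skew_shift \<theta> \<alpha> n c) $ m = (\<Sum>l<n. Q l $ m * skew_shift \<theta> \<alpha> n c $ l)"
      using mv_index[OF H _ m] m by (simp add: Hij)
    also have "\<dots> = Q 0 $ m * (\<alpha> * \<theta> (c $ n')) + (\<Sum>l<n'. Q (Suc l) $ m * \<theta> (c $ l))"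
    proof -
      have s0: "skew_shift \<theta> \<alpha> n c $ 0 = \<alpha> * \<theta> (c $ n')" using n' by (simp add: skew_shift_index)
      have sS: "skew_shift \<theta> \<alpha> n c $ Suc i = \<theta> (c $ i)" if "i < n'" for i
        using n' that by (simp add: skew_shift_index)
      show ?thesis unfolding n' sum.lessThan_Suc_shift unfolding n'[symmetric] s0
        by (simp add: sS)
    qed
    also have "\<dots> = (\<Sum>l<n. \<theta> (c $ l) * Q (Suc l) $ m)"
      unfolding n' sum.lessThan_Suc using Qn[OF m] by (simp add: n'[symmetric] algebra_simps)
    also have "\<dots> = (\<Sum>l<n. \<Sum>i<k. T $$ (i, m) * (\<theta> (Q l $ i) * \<theta> (c $ l)))"
      using m by (simp add: Qs sum_distrib_left algebra_simps)
    also have "\<dots> = (\<Sum>i<k. T $$ (i, m) * \<theta> (\<Sum>l<n. Q l $ i * c $ l))"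
      by (subst sum.swap) (simp add: fa_sum[OF fa] fa_mult[OF fa] sum_distrib_left)
    also have "\<dots> = 0" by (simp add: Hc0 fa_0[OF fa])
    finally show ?thesis .
  qed
  hence "H *\<^sub>v skew_shift \<theta> \<alpha> n c = 0\<^sub>v k" using H by (intro eq_vecI) auto
  thus "skew_shift \<theta> \<alpha> n c \<in> C" using C H_def by simp
qed



lemma vec_restrict_eq: "v \<in> carrier_vec n \<Longrightarrow> vec n (restrict (\<lambda>i. v $ i) {..<n}) = v"
  apply (rule eq_vecI)
  apply simp
  apply simp
  done

lemma finite_carrier_vec: "finite (carrier_vec n :: 'a::finite vec set)"
proof -
  have "carrier_vec n \<subseteq> (\<lambda>f. vec n f) ` ({..<n} \<rightarrow>\<^sub>E (UNIV :: 'a set))"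
  proof
    fix v :: "'a vec" assume v: "v \<in> carrier_vec n"
    from vec_restrict_eq[OF v] have e: "v = vec n (restrict (\<lambda>i. v $ i) {..<n})" by simp
    have r: "restrict (\<lambda>i. v $ i) {..<n} \<in> {..<n} \<rightarrow>\<^sub>E (UNIV :: 'a set)" by simp
    show "v \<in> (\<lambda>f. vec n f) ` ({..<n} \<rightarrow>\<^sub>E UNIV)" by (subst e, rule imageI, rule r)
  qed
  moreover have "finite ((\<lambda>f. vec n f) ` ({..<n} \<rightarrow>\<^sub>E (UNIV :: 'a set)))"
    by (intro finite_imageI finite_PiE) auto
  ultimately show ?thesis by (rule finite_subset)
qed

lemma mult_unit_col:
  fixes H :: "'a::field mat"
  assumes H: "H \<in> carrier_mat k n" and j: "j < n"
  shows "H *\<^sub>v unit_vec n j = col H j"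
proof (rule eq_vecI)
  fix i assume "i < dim_vec (col H j)"
  hence i: "i < k" using H by auto
  have "(H *\<^sub>v unit_vec n j) $ i = (\<Sum>l<n. H $$ (i, l) * unit_vec n j $ l)"
    by (rule mv_index[OF H _ i]) simp
  also have "\<dots> = (\<Sum>l<n. if l = j then H $$ (i, l) else 0)"
    using j by (intro sum.cong refl) simp
  also have "\<dots> = H $$ (i, j)" using j by simp
  finally show "(H *\<^sub>v unit_vec n j) $ i = col H j $ i" using H i j by auto
qed (use H in auto)

lemma fwd:
  fixes \<theta> :: "'a::{field,finite} \<Rightarrow> 'a" and H :: "'a mat"
  assumes fa: "field_automorphism \<theta>" and a0: "\<alpha> \<noteq> 0" and n: "n \<ge> 1"
    and H: "H \<in> carrier_mat k n"
    and C: "C = {c \<in> carrier_vec n. H *\<^sub>v c = 0\<^sub>v k}"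
    and cyc: "skew_cyclic \<theta> \<alpha> n C"
    and uc: "\<And>i. i < k \<Longrightarrow> u i \<in> carrier_vec n"
    and uH: "\<And>i. i < k \<Longrightarrow> H *\<^sub>v u i = unit_vec k i"
  shows "\<exists>T. T \<in> carrier_mat k k \<and> invertible_mat T \<and>
     ((semilin \<theta> T) ^^ n) (col H 0) = \<alpha> \<cdot>\<^sub>v col H 0 \<and>
     orbit_matrix k n (semilin \<theta> T) (col H 0) = H"
proof -
  define s where "s = skew_shift \<theta> \<alpha> n"
  define comb where "comb x = vec n (\<lambda>l. \<Sum>i<k. x $ i * u i $ l)" for x :: "'a vec"
  define T where "T = mat k k (\<lambda>(i, j). (H *\<^sub>v s (u i)) $ j)"
  define \<tau> where "\<tau> = semilin \<theta> T"
  have T: "T \<in> carrier_mat k k" by (simp add: T_def)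
  have combc: "comb x \<in> carrier_vec n" for x by (simp add: comb_def)
  have sc: "s c \<in> carrier_vec n" for c by (simp add: s_def)
  obtain n' where n': "n = Suc n'" using n by (cases n) auto
  have L1: "H *\<^sub>v comb x = x" if x: "x \<in> carrier_vec k" for x
  proof (rule eq_vecI)
    fix m assume "m < dim_vec x"
    hence m: "m < k" using x by auto
    have "(H *\<^sub>v comb x) $ m = (\<Sum>l<n. H $$ (m, l) * (\<Sum>i<k. x $ i * u i $ l))"
      using mv_index[OF H combc m] by (simp add: comb_def)
    also have "\<dots> = (\<Sum>i<k. x $ i * (\<Sum>l<n. H $$ (m, l) * u i $ l))"
      by (simp add: sum_distrib_left algebra_simps) (rule sum.swap)
    also have "\<dots> = (\<Sum>i<k. x $ i * (H *\<^sub>v u i) $ m)"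
      using mv_index[OF H uc m] by simp
    also have "\<dots> = (\<Sum>i<k. if i = m then x $ i else 0)"
      using m by (intro sum.cong refl) (simp add: uH)
    also have "\<dots> = x $ m" using m by simp
    finally show "(H *\<^sub>v comb x) $ m = x $ m" .
  qed (use H x in auto)
  have L2: "s (comb x) $ l = (\<Sum>i<k. \<theta> (x $ i) * s (u i) $ l)" if l: "l < n" for x l
  proof (cases "l = 0")
    case True
    have "s (comb x) $ l = \<alpha> * \<theta> (\<Sum>i<k. x $ i * u i $ n')"
      using True l n' by (simp add: s_def skew_shift_index comb_def)
    also have "\<dots> = (\<Sum>i<k. \<theta> (x $ i) * (\<alpha> * \<theta> (u i $ n')))"
      by (simp add: fa_sum[OF fa] fa_mult[OF fa] sum_distrib_left algebra_simps)
    also have "\<dots> = (\<Sum>i<k. \<theta> (x $ i) * s (u i) $ l)"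
      using True l n' by (simp add: s_def skew_shift_index)
    finally show ?thesis .
  next
    case False
    have "s (comb x) $ l = \<theta> (\<Sum>i<k. x $ i * u i $ (l - 1))"
      using False l by (simp add: s_def skew_shift_index comb_def)
    also have "\<dots> = (\<Sum>i<k. \<theta> (x $ i) * \<theta> (u i $ (l - 1)))"
      by (simp add: fa_sum[OF fa] fa_mult[OF fa])
    also have "\<dots> = (\<Sum>i<k. \<theta> (x $ i) * s (u i) $ l)"
      using False l by (simp add: s_def skew_shift_index)
    finally show ?thesis .
  qed
  have L3: "H *\<^sub>v s (comb x) = \<tau> x" if x: "x \<in> carrier_vec k" for x
  proof (rule eq_vecI)
    fix m assume "m < dim_vec (\<tau> x)"
    hence m: "m < k" using x by (auto simp: \<tau>_def)
    have "(H *\<^sub>v s (comb x)) $ m = (\<Sum>l<n. H $$ (m, l) * (\<Sum>i<k. \<theta> (x $ i) * s (u i) $ l))"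
      using mv_index[OF H sc m] by (simp add: L2)
    also have "\<dots> = (\<Sum>i<k. \<theta> (x $ i) * (\<Sum>l<n. H $$ (m, l) * s (u i) $ l))"
      by (simp add: sum_distrib_left algebra_simps) (rule sum.swap)
    also have "\<dots> = (\<Sum>i<k. \<theta> (x $ i) * T $$ (i, m))"
      using mv_index[OF H sc m] m by (simp add: T_def)
    also have "\<dots> = \<tau> x $ m"
      using x m by (simp add: \<tau>_def semilin_index)
    finally show "(H *\<^sub>v s (comb x)) $ m = \<tau> x $ m" .
  qed (use H x in \<open>auto simp: \<tau>_def\<close>)
  have L4: "s (c - d) = s c - s d" if "c \<in> carrier_vec n" "d \<in> carrier_vec n" for c d
  proof (rule eq_vecI)
    fix l assume "l < dim_vec (s c - s d)"
    hence l: "l < n" by (simp add: s_def skew_shift_def)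
    have e: "(s c - s d) $ l = s c $ l - s d $ l" using l by (simp add: s_def skew_shift_def)
    have n1: "n - 1 < n" using n by simp
    show "s (c - d) $ l = (s c - s d) $ l"
      unfolding e using l that n1 by (simp add: s_def skew_shift_index fa_minus[OF fa] algebra_simps)
  qed (simp add: s_def skew_shift_def)
  have sC: "s c \<in> C" if "c \<in> C" for c using cyc that by (simp add: skew_cyclic_def s_def)
  have L5: "H *\<^sub>v s c = \<tau> (H *\<^sub>v c)" if c: "c \<in> carrier_vec n" for c
  proof -
    define x where "x = H *\<^sub>v c"
    have x: "x \<in> carrier_vec k" unfolding x_def using H c by (rule mult_mat_vec_carrier)
    have "H *\<^sub>v (c - comb x) = H *\<^sub>v c - H *\<^sub>v comb x"
      using H c combc by (simp add: mult_minus_distrib_mat_vec)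
    also have "\<dots> = 0\<^sub>v k" using L1[OF x] x by (simp add: x_def)
    finally have "c - comb x \<in> C" using C c combc by simp
    hence "s (c - comb x) \<in> C" by (rule sC)
    hence "H *\<^sub>v (s c - s (comb x)) = 0\<^sub>v k" using C L4[OF c combc] by simp
    hence "H *\<^sub>v s c - H *\<^sub>v s (comb x) = 0\<^sub>v k"
      using H sc by (simp add: mult_minus_distrib_mat_vec)
    hence eq: "H *\<^sub>v s c = H *\<^sub>v s (comb x)"
    proof -
      assume d: "H *\<^sub>v s c - H *\<^sub>v s (comb x) = 0\<^sub>v k"
      have a: "H *\<^sub>v s c \<in> carrier_vec k" "H *\<^sub>v s (comb x) \<in> carrier_vec k"
        using H sc by (auto intro: mult_mat_vec_carrier)
      show ?thesis
      proof (rule eq_vecI)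
        fix m assume "m < dim_vec (H *\<^sub>v s (comb x))"
        hence m: "m < k" using H by auto
        have "(H *\<^sub>v s c - H *\<^sub>v s (comb x)) $ m = 0" using d m by simp
        moreover have "(H *\<^sub>v s c - H *\<^sub>v s (comb x)) $ m = (H *\<^sub>v s c) $ m - (H *\<^sub>v s (comb x)) $ m"
          using a m H by (intro index_minus_vec) auto
        ultimately show "(H *\<^sub>v s c) $ m = (H *\<^sub>v s (comb x)) $ m" by simp
      qed (use a in auto)
    qed
    thus ?thesis using L3[OF x] x_def by simp
  qed
  have L6: "s (unit_vec n j) = unit_vec n (Suc j)" if j: "Suc j < n" for j
  proof (rule eq_vecI)
    fix l assume "l < dim_vec (unit_vec n (Suc j) :: 'a vec)"
    hence l: "l < n" by simp
    have n1: "n - 1 < n" "j < n" "l - 1 < n" using n j l by auto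
    show "s (unit_vec n j) $ l = unit_vec n (Suc j) $ l"
      using l j n1 by (auto simp: s_def skew_shift_index fa_0[OF fa] fa_1[OF fa])
  qed (simp add: s_def skew_shift_def)
  have L6': "s (unit_vec n n') = \<alpha> \<cdot>\<^sub>v unit_vec n 0"
  proof (rule eq_vecI)
    fix l assume "l < dim_vec (\<alpha> \<cdot>\<^sub>v unit_vec n 0 :: 'a vec)"
    hence l: "l < n" by simp
    have n1: "n' < n" "l - 1 < n" "0 < n" using n' l by auto
    show "s (unit_vec n n') $ l = (\<alpha> \<cdot>\<^sub>v unit_vec n 0) $ l"
      using l n1 n' by (auto simp: s_def skew_shift_index fa_0[OF fa] fa_1[OF fa])
  qed (simp add: s_def skew_shift_def)
  define P where "P = col H 0"
  have L7: "(\<tau> ^^ j) P = H *\<^sub>v unit_vec n j" if "j < n" for j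
    using that
  proof (induction j)
    case 0
    thus ?case using mult_unit_col[OF H, of 0] by (simp add: P_def)
  next
    case (Suc j)
    hence "(\<tau> ^^ Suc j) P = \<tau> (H *\<^sub>v unit_vec n j)" by simp
    also have "\<dots> = H *\<^sub>v s (unit_vec n j)" using L5[of "unit_vec n j"] by simp
    also have "\<dots> = H *\<^sub>v unit_vec n (Suc j)" using L6 Suc.prems by simp
    finally show ?case .
  qed
  have L8: "(\<tau> ^^ n) P = \<alpha> \<cdot>\<^sub>v P"
  proof -
    have "(\<tau> ^^ n) P = \<tau> ((\<tau> ^^ n') P)" using n' by simp
    also have "\<dots> = \<tau> (H *\<^sub>v unit_vec n n')" using L7[of n'] n' by simp
    also have "\<dots> = H *\<^sub>v s (unit_vec n n')" using L5[of "unit_vec n n'"] by simp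
    also have "\<dots> = \<alpha> \<cdot>\<^sub>v (H *\<^sub>v unit_vec n 0)" unfolding L6' using H by (simp add: mult_mat_vec)
    also have "\<dots> = \<alpha> \<cdot>\<^sub>v P" using mult_unit_col[OF H, of 0] n' by (simp add: P_def)
    finally show ?thesis .
  qed
  have L9: "orbit_matrix k n \<tau> P = H"
  proof (rule eq_matI)
    fix i j assume i: "i < dim_row H" and j: "j < dim_col H"
    hence ik: "i < k" and jn: "j < n" using H by auto
    have "orbit_matrix k n \<tau> P $$ (i, j) = (\<tau> ^^ j) P $ i"
      using ik jn by (simp add: orbit_matrix_def mat_of_cols_index)
    also have "\<dots> = col H j $ i" using L7[OF jn] mult_unit_col[OF H jn] by simp
    also have "\<dots> = H $$ (i, j)" using i j by simp
    finally show "orbit_matrix k n \<tau> P $$ (i, j) = H $$ (i, j)" .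
  qed (use H in \<open>auto simp: orbit_matrix_def\<close>)
  have Csub: "C \<subseteq> carrier_vec n" using C by auto
  have finC: "finite C" using finite_subset[OF Csub finite_carrier_vec] .
  have inj_s: "c = d" if c: "c \<in> carrier_vec n" and d: "d \<in> carrier_vec n" and e: "s c = s d" for c d
  proof (rule eq_vecI)
    have injt: "inj \<theta>" using fa_bij[OF fa] bij_is_inj by blast
    fix l assume "l < dim_vec d"
    hence l: "l < n" using d by simp
    show "c $ l = d $ l"
    proof (cases "l < n'")
      case True
      have "s c $ Suc l = s d $ Suc l" using e by simp
      hence "\<theta> (c $ l) = \<theta> (d $ l)" using True n' by (simp add: s_def skew_shift_index)
      thus ?thesis using injt by (simp add: inj_eq)
    next
      case False
      hence ln: "l = n'" using l n' by simp
      have "s c $ 0 = s d $ 0" using e by simp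
      hence "\<alpha> * \<theta> (c $ n') = \<alpha> * \<theta> (d $ n')" using n' by (simp add: s_def skew_shift_index)
      hence "\<theta> (c $ n') = \<theta> (d $ n')" using a0 by simp
      thus ?thesis using injt ln by (simp add: inj_eq)
    qed
  qed (use c d in auto)
  have sCC: "s ` C = C"
  proof (rule card_subset_eq[OF finC])
    show "s ` C \<subseteq> C" using sC by blast
    have "inj_on s C" using inj_s Csub by (auto intro: inj_onI)
    thus "card (s ` C) = card C" by (rule card_image)
  qed
  have dT: "det T \<noteq> 0"
  proof
    assume "det T = 0"
    hence "det (transpose_mat T) = 0" using det_transpose[OF T] by simp
    then obtain v where v: "v \<in> carrier_vec k" "v \<noteq> 0\<^sub>v k" "transpose_mat T *\<^sub>v v = 0\<^sub>v k"
      using det_0_iff_vec_prod_zero_field[of "transpose_mat T" k] T by auto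
    have surjt: "surj \<theta>" using fa_bij[OF fa] bij_is_surj by blast
    define x where "x = vec k (\<lambda>i. inv_into UNIV \<theta> (v $ i))"
    have x: "x \<in> carrier_vec k" by (simp add: x_def)
    have tx: "\<theta> (x $ i) = v $ i" if "i < k" for i
      using that surjt by (simp add: x_def surj_f_inv_f)
    have "\<tau> x = 0\<^sub>v k"
    proof (rule eq_vecI)
      fix m assume "m < dim_vec (0\<^sub>v k :: 'a vec)"
      hence m: "m < k" by simp
      have "\<tau> x $ m = (\<Sum>i<k. \<theta> (x $ i) * T $$ (i, m))"
        using x m by (simp add: \<tau>_def semilin_index)
      also have "\<dots> = (\<Sum>i<k. transpose_mat T $$ (m, i) * v $ i)"
        using T m by (intro sum.cong refl) (auto simp: tx mult.commute)
      also have "\<dots> = (transpose_mat T *\<^sub>v v) $ m"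
        using mv_index[of "transpose_mat T" k k v m] T v m by simp
      also have "\<dots> = 0" using v m by simp
      finally show "\<tau> x $ m = 0\<^sub>v k $ m" using m by simp
    qed (use x in \<open>auto simp: \<tau>_def\<close>)
    hence "H *\<^sub>v s (comb x) = 0\<^sub>v k" using L3[OF x] by simp
    hence "s (comb x) \<in> C" using C sc by simp
    hence "s (comb x) \<in> s ` C" using sCC by simp
    then obtain d where d: "d \<in> C" "s d = s (comb x)" by auto
    hence "d = comb x" using inj_s[of d "comb x"] Csub combc by auto
    hence "comb x \<in> C" using d by simp
    hence "x = 0\<^sub>v k" using C L1[OF x] by simp
    hence "v = 0\<^sub>v k"
      using v(1) tx by (intro eq_vecI) (auto simp: fa_0[OF fa] x_def)
    thus False using v(2) by simp
  qed
  have "T \<in> Units (ring_mat TYPE('a) k ())" by (rule det_non_zero_imp_unit[OF T dT])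
  then obtain B where B: "B \<in> carrier_mat k k" "B * T = 1\<^sub>m k" "T * B = 1\<^sub>m k"
    unfolding Units_def by (auto simp: ring_mat_simps)
  have invT: "invertible_mat T"
    unfolding invertible_mat_def inverts_mat_def using T B by auto
  show ?thesis using T invT L8 L9 unfolding \<tau>_def P_def by blast
qed



lemma rank_from_units:
  fixes H :: "'a::field mat"
  assumes H: "H \<in> carrier_mat k n" and U: "set (unit_vecs k) \<subseteq> set (cols H)"
  shows "vec_space.rank k H = k"
proof -
  interpret K: vec_space "TYPE('a)" k .
  have cs: "set (cols H) \<subseteq> carrier_vec k" using H cols_dim by blast
  have sp: "K.span (set (cols H)) = carrier_vec k"
  proof
    show "K.span (set (cols H)) \<subseteq> carrier_vec k" using K.span_is_subset2[OF cs] by simp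
    show "carrier_vec k \<subseteq> K.span (set (cols H))"
      using K.span_is_monotone[OF U] K.span_unit_vecs_is_carrier by simp
  qed
  have r: "(module_vec TYPE('a) k)\<lparr>carrier := carrier_vec k\<rparr> = module_vec TYPE('a) k"
    by (simp add: module_vec_def)
  show ?thesis unfolding K.rank_def sp r using K.dim_is_n .
qed



lemma basis_ext:
  fixes C :: "'a::{field,finite} vec set"
  assumes lc: "linear_code n C" and cd: "code_dim n C = n - k" and kn: "k \<le> n"
  shows "\<exists>bs js. distinct bs \<and> length bs = n - k \<and> set bs \<subseteq> carrier_vec n \<and>
     LinearCombinations.module.span class_ring (module_vec TYPE('a) n) (set bs) = C \<and>
     distinct js \<and> length js = k \<and> set js \<subseteq> {..<n} \<and>
     \<not> LinearCombinations.module.lin_dep class_ring (module_vec TYPE('a) n) (set (bs @ map (unit_vec n) js)) \<and>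
     distinct (bs @ map (unit_vec n) js)"
proof -
  interpret V: vec_space "TYPE('a)" n .
  have submod: "submodule class_ring C V.V"
    using lc unfolding linear_code_def VectorSpace.subspace_def by blast
  have sub: "subspace class_ring C V.V" using lc unfolding linear_code_def by blast
  have vsC: "vectorspace class_ring (V.vs C)" using V.subspace_is_vs[OF sub] .
  have Csub: "C \<subseteq> carrier_vec n" using submod unfolding submodule_def by auto
  have finC: "finite C" using finite_subset[OF Csub finite_carrier_vec] .
  have spanC: "V.span C = C"
    using V.span_is_subset[OF subset_refl submod] V.in_own_span[of C] Csub by auto
  have fd: "vectorspace.fin_dim class_ring (V.vs C)"
    unfolding vectorspace.fin_dim_def[OF vsC]
    using finC V.span_li_not_depend(1)[OF subset_refl submod] spanC by auto
  obtain Bc where finBc: "finite Bc" and bas: "vectorspace.basis class_ring (V.vs C) Bc"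
    using vectorspace.finite_basis_exists[OF vsC fd] by blast
  have cardBc: "card Bc = n - k"
    using vectorspace.dim_basis[OF vsC finBc bas] cd unfolding code_dim_def by simp
  have liC: "\<not> LinearCombinations.module.lin_dep class_ring (V.vs C) Bc" and genC: "LinearCombinations.module.span class_ring (V.vs C) Bc = C"
    and BcC: "Bc \<subseteq> C"
    using bas unfolding vectorspace.basis_def[OF vsC] by auto
  have liBc: "V.lin_indpt Bc" using liC V.span_li_not_depend(2)[OF BcC submod] by simp
  have spBc: "V.span Bc = C" using genC V.span_li_not_depend(1)[OF BcC submod] by simp
  have BcV: "Bc \<subseteq> carrier_vec n" using BcC Csub by auto
  define S where "S = Bc \<union> set (unit_vecs n)"
  have SV: "S \<subseteq> carrier_vec n" using BcV unit_vecs_carrier by (auto simp: S_def)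
  have finS: "finite S" using finBc by (simp add: S_def)
  obtain A where finA: "finite A" and maxA: "maximal A (\<lambda>T. T \<subseteq> S \<and> V.lin_indpt T)" and BcA: "Bc \<subseteq> A"
    using maximal_exists_superset[OF finS, of "\<lambda>T. T \<subseteq> S \<and> V.lin_indpt T" Bc] liBc
    by (auto simp: S_def)
  have AS: "A \<subseteq> S" and liA: "V.lin_indpt A" using maxA unfolding maximal_def by auto
  have spS: "V.span S = carrier_vec n"
  proof
    show "V.span S \<subseteq> carrier_vec n" using V.span_is_subset2[OF SV] by simp
    show "carrier_vec n \<subseteq> V.span S"
      using V.span_is_monotone[of "set (unit_vecs n)" S] V.span_unit_vecs_is_carrier by (auto simp: S_def)
  qed
  have r: "(module_vec TYPE('a) n)\<lparr>carrier := carrier_vec n\<rparr> = module_vec TYPE('a) n"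
    by (simp add: module_vec_def)
  have cardA: "card A = n"
    using V.dim_span[OF SV finS maxA] unfolding spS r V.dim_is_n by simp
  define D where "D = A - Bc"
  have cardD: "card D = k" using cardA cardBc BcA finA kn
    by (simp add: D_def card_Diff_subset finite_subset[OF BcA finA])
  have DU: "D \<subseteq> set (unit_vecs n)" using AS BcA by (auto simp: D_def S_def)
  define J where "J = {j. j < n \<and> unit_vec n j \<in> D}"
  have DJ: "D = unit_vec n ` J" using DU by (auto simp: J_def unit_vecs_def)
  have injJ: "inj_on (unit_vec n :: nat \<Rightarrow> 'a vec) J" by (auto simp: J_def inj_on_def)
  have cardJ: "card J = k" using cardD DJ card_image[OF injJ] by simp
  have finJ: "finite J" by (simp add: J_def)
  define js where "js = sorted_list_of_set J"
  have js: "distinct js" "length js = k" "set js = J" using cardJ finJ by (auto simp: js_def)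
  obtain bs where bs: "set bs = Bc" "distinct bs" using finite_distinct_list[OF finBc] by blast
  have lbs: "length bs = n - k" using bs cardBc distinct_card by fastforce
  have setall: "set (bs @ map (unit_vec n) js) = A" using bs js DJ BcA by (auto simp: D_def)
  have dall: "distinct (bs @ map (unit_vec n) js)"
  proof -
    have JD: "unit_vec n j \<notin> Bc" if "j \<in> J" for j using that by (auto simp: J_def D_def)
    show ?thesis using bs js injJ JD by (auto simp: distinct_map)
  qed
  show ?thesis
    apply (rule exI[of _ bs], rule exI[of _ js])
    using bs lbs BcV spBc js dall setall liA by (auto simp: J_def)
qed



lemma constr:
  fixes C :: "'a::{field,finite} vec set"
  assumes lc: "linear_code n C" and cd: "code_dim n C = n - k" and kn: "k \<le> n"
  shows "\<exists>H u. H \<in> carrier_mat k n \<and> vec_space.rank k H = k \<and>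
     C = {c \<in> carrier_vec n. H *\<^sub>v c = 0\<^sub>v k} \<and>
     (\<forall>i<k. u i \<in> carrier_vec n \<and> H *\<^sub>v u i = unit_vec k i)"
proof -
  interpret V: vec_space "TYPE('a)" n .
  obtain bs js where bs: "distinct bs" "length bs = n - k" "set bs \<subseteq> carrier_vec n"
      "V.span (set bs) = C"
    and js: "distinct js" "length js = k" "set js \<subseteq> {..<n}"
    and li: "V.lin_indpt (set (bs @ map (unit_vec n) js))"
    and dist: "distinct (bs @ map (unit_vec n) js)"
    using basis_ext[OF lc cd kn] by blast
  define ws where "ws = bs @ map (unit_vec n) js"
  have lws: "length ws = n" using bs js kn by (simp add: ws_def)
  have wsV: "set ws \<subseteq> carrier_vec n" using bs by (auto simp: ws_def)
  define M where "M = mat_of_cols n ws"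
  have M: "M \<in> carrier_mat n n" using lws by (metis M_def mat_of_cols_carrier(1))
  have cM: "cols M = ws" using wsV by (simp add: M_def)
  have "V.rank M = n" using V.lin_indpt_full_rank[OF M] cM dist li by (simp add: ws_def)
  hence dM: "det M \<noteq> 0" using V.det_rank_iff[OF M] by simp
  have "M \<in> Units (ring_mat TYPE('a) n ())" by (rule det_non_zero_imp_unit[OF M dM])
  then obtain Mi where Mi: "Mi \<in> carrier_mat n n" "Mi * M = 1\<^sub>m n" "M * Mi = 1\<^sub>m n"
    unfolding Units_def by (auto simp: ring_mat_simps)
  define Mb where "Mb = mat_of_cols n bs"
  have Mb: "Mb \<in> carrier_mat n (n - k)" using bs by (metis Mb_def mat_of_cols_carrier(1))
  have cMb: "cols Mb = bs" using bs by (simp add: Mb_def)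
  define H where "H = mat k n (\<lambda>(i, j). Mi $$ (n - k + i, j))"
  have H: "H \<in> carrier_mat k n" by (simp add: H_def)
  have HMi: "(H *\<^sub>v c) $ i = (Mi *\<^sub>v c) $ (n - k + i)" if c: "c \<in> carrier_vec n" and i: "i < k" for c i
  proof -
    have i': "n - k + i < n" using i kn by simp
    show ?thesis using mv_index[OF H c i] mv_index[OF Mi(1) c i'] i by (simp add: H_def)
  qed
  have Mlem: "M *\<^sub>v x = Mb *\<^sub>v vec (n - k) (\<lambda>j. x $ j)"
    if x: "x \<in> carrier_vec n" and x0: "\<And>j. n - k \<le> j \<Longrightarrow> j < n \<Longrightarrow> x $ j = 0" for x
  proof (rule eq_vecI)
    fix m assume "m < dim_vec (Mb *\<^sub>v vec (n - k) (\<lambda>j. x $ j))"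
    hence m: "m < n" using Mb by simp
    have "(M *\<^sub>v x) $ m = (\<Sum>l<n. M $$ (m, l) * x $ l)" by (rule mv_index[OF M x m])
    also have "\<dots> = (\<Sum>l<n - k. M $$ (m, l) * x $ l)"
      by (rule sum.mono_neutral_right) (auto simp: x0)
    also have "\<dots> = (\<Sum>l<n - k. Mb $$ (m, l) * vec (n - k) (\<lambda>j. x $ j) $ l)"
      using m bs lws by (intro sum.cong refl) (simp add: M_def Mb_def mat_of_cols_index ws_def nth_append)
    also have "\<dots> = (Mb *\<^sub>v vec (n - k) (\<lambda>j. x $ j)) $ m"
      by (rule mv_index[OF Mb _ m, symmetric]) simp
    finally show "(M *\<^sub>v x) $ m = (Mb *\<^sub>v vec (n - k) (\<lambda>j. x $ j)) $ m" .
  qed (use M Mb in auto)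
  have sub1: "H *\<^sub>v c = 0\<^sub>v k" if cC: "c \<in> C" for c
  proof -
    have "c \<in> V.span (set bs)" using cC bs by simp
    then obtain a where a: "V.lincomb a (set bs) = c"
      using V.finite_in_span[OF finite_set bs(3)] by blast
    define w where "w = vec (n - k) (\<lambda>i. a (col Mb i))"
    have Mbw: "Mb *\<^sub>v w = c" using V.mat_mult_eq_lincomb[OF Mb] cMb bs a by (simp add: w_def)
    define x where "x = vec n (\<lambda>j. if j < n - k then w $ j else 0)"
    have x: "x \<in> carrier_vec n" by (simp add: x_def)
    have vx: "vec (n - k) (\<lambda>j. x $ j) = w"
      apply (rule eq_vecI)
       apply (simp add: x_def w_def)
      apply (simp add: w_def)
      done
    have x0: "x $ j = 0" if "n - k \<le> j" "j < n" for j using that by (simp add: x_def)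
    have Mx: "M *\<^sub>v x = c" using Mlem[OF x x0] vx Mbw by simp
    have Mic: "Mi *\<^sub>v c = x" using Mx Mi M x by (metis assoc_mult_mat_vec one_mult_mat_vec)
    have cV: "c \<in> carrier_vec n" using Mx M x by (metis mult_mat_vec_carrier)
    have "(H *\<^sub>v c) $ i = 0" if i: "i < k" for i
    proof -
      have "n - k + i < n" "\<not> n - k + i < n - k" using i kn by auto
      thus ?thesis using HMi[OF cV i] Mic by (simp add: x_def)
    qed
    thus ?thesis using H by (intro eq_vecI) auto
  qed
  have sub2: "c \<in> C" if c: "c \<in> carrier_vec n" and Hc: "H *\<^sub>v c = 0\<^sub>v k" for c
  proof -
    define x where "x = Mi *\<^sub>v c"
    have x: "x \<in> carrier_vec n" using Mi c by (simp add: x_def)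
    have x0: "x $ j = 0" if "n - k \<le> j" "j < n" for j
    proof -
      have "j - (n - k) < k" using that by simp
      from HMi[OF c this] Hc have "x $ (n - k + (j - (n - k))) = 0" using \<open>j - (n - k) < k\<close>
        by (simp add: x_def)
      thus ?thesis using that by simp
    qed
    have Mx: "M *\<^sub>v x = c" using Mi M c by (metis x_def assoc_mult_mat_vec one_mult_mat_vec)
    define w where "w = vec (n - k) (\<lambda>j. x $ j)"
    have "c = Mb *\<^sub>v w" using Mlem[OF x x0] Mx by (simp add: w_def)
    also have "\<dots> = V.lincomb (\<lambda>a. w $ find_first a (cols Mb)) (set (cols Mb))"
      by (rule V.lincomb_eq_mat_mult[OF Mb _ , symmetric]) (auto simp: w_def cMb bs)
    finally have "c \<in> V.span (set bs)"
      using V.finite_span[OF finite_set bs(3)] cMb by auto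
    thus ?thesis using bs by simp
  qed
  define u :: "nat \<Rightarrow> 'a vec" where "u i = unit_vec n (js ! i)" for i
  have uH: "H *\<^sub>v u i = unit_vec k i" if i: "i < k" for i
  proof -
    have jn: "js ! i < n" using js i nth_mem by fastforce
    have i': "n - k + i < n" using i kn by simp
    have "u i = ws ! (n - k + i)" using i bs js by (simp add: u_def ws_def nth_append)
    also have "\<dots> = col M (n - k + i)"
    proof -
      have "ws ! (n - k + i) \<in> carrier_vec n" using wsV lws i' nth_mem by fastforce
      thus ?thesis using col_mat_of_cols[of "n - k + i" ws n] i' lws by (simp add: M_def)
    qed
    also have "\<dots> = M *\<^sub>v unit_vec n (n - k + i)" using mult_unit_col[OF M i'] by simp
    finally have ue: "u i = M *\<^sub>v unit_vec n (n - k + i)" .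
    have "Mi *\<^sub>v (M *\<^sub>v unit_vec n (n - k + i)) = (Mi * M) *\<^sub>v unit_vec n (n - k + i)"
      by (rule assoc_mult_mat_vec[symmetric, OF Mi(1) M]) simp
    also have "\<dots> = unit_vec n (n - k + i)" using Mi(2) by simp
    finally have "Mi *\<^sub>v u i = unit_vec n (n - k + i)" using ue by simp
    moreover have lt: "\<And>m. m < k \<Longrightarrow> n - k + m < n" using kn by auto
    ultimately show ?thesis using H HMi[of "u i"] i i' by (intro eq_vecI) (auto simp: u_def)
  qed
  have uc: "u i \<in> carrier_vec n" for i by (simp add: u_def)
  have U: "set (unit_vecs k :: 'a vec list) \<subseteq> set (cols H)"
  proof
    fix v :: "'a vec" assume "v \<in> set (unit_vecs k)"
    then obtain i where i: "i < k" and v: "v = unit_vec k i" by (auto simp: unit_vecs_def)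
    have jn: "js ! i < n" using js i nth_mem by fastforce
    have "v = col H (js ! i)" using uH[OF i] mult_unit_col[OF H jn] v by (simp add: u_def)
    thus "v \<in> set (cols H)" using H jn by (metis carrier_matD(2) cols_length cols_nth nth_mem)
  qed
  have "C = {c \<in> carrier_vec n. H *\<^sub>v c = 0\<^sub>v k}"
    using sub1 sub2 bs by auto
  thus ?thesis using H rank_from_units[OF H U] uH uc by blast
qed


theorem mainTheorem5:
  fixes \<theta> :: "'a::{field,finite} \<Rightarrow> 'a" and \<alpha> :: 'a and k n :: nat and C :: "'a vec set"
  assumes "field_automorphism \<theta>"
    and "\<alpha> \<noteq> 0"
    and "1 \<le> k" and "k \<le> n"
    and "linear_code n C" and "code_dim n C = n - k"
  shows "skew_cyclic \<theta> \<alpha> n C \<longleftrightarrow>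
    (\<exists>P T. P \<in> carrier_vec k \<and> T \<in> carrier_mat k k \<and> invertible_mat T \<and>
       ((semilin \<theta> T) ^^ n) P = \<alpha> \<cdot>\<^sub>v P \<and>
       parity_check_matrix k n (orbit_matrix k n (semilin \<theta> T) P) C)"
proof
  have n: "n \<ge> 1" using assms(3,4) by simp
  assume cyc: "skew_cyclic \<theta> \<alpha> n C"
  obtain H u where H: "H \<in> carrier_mat k n" and rk: "vec_space.rank k H = k"
    and C: "C = {c \<in> carrier_vec n. H *\<^sub>v c = 0\<^sub>v k}"
    and u: "\<And>i. i < k \<Longrightarrow> u i \<in> carrier_vec n \<and> H *\<^sub>v u i = unit_vec k i"
    using constr[OF assms(5,6,4)] by blast
  obtain T where T: "T \<in> carrier_mat k k" "invertible_mat T"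
      "((semilin \<theta> T) ^^ n) (col H 0) = \<alpha> \<cdot>\<^sub>v col H 0"
      "orbit_matrix k n (semilin \<theta> T) (col H 0) = H"
    using fwd[OF assms(1,2) n H C cyc, of u] u by blast
  have P: "col H 0 \<in> carrier_vec k" using H by (simp add: carrier_vecI)
  have "parity_check_matrix k n (orbit_matrix k n (semilin \<theta> T) (col H 0)) C"
    unfolding T(4) parity_check_matrix_def using H rk C by blast
  thus "\<exists>P T. P \<in> carrier_vec k \<and> T \<in> carrier_mat k k \<and> invertible_mat T \<and>
       ((semilin \<theta> T) ^^ n) P = \<alpha> \<cdot>\<^sub>v P \<and>
       parity_check_matrix k n (orbit_matrix k n (semilin \<theta> T) P) C"
    using P T by blast
next
  have n: "n \<ge> 1" using assms(3,4) by simp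
  assume "\<exists>P T. P \<in> carrier_vec k \<and> T \<in> carrier_mat k k \<and> invertible_mat T \<and>
       ((semilin \<theta> T) ^^ n) P = \<alpha> \<cdot>\<^sub>v P \<and>
       parity_check_matrix k n (orbit_matrix k n (semilin \<theta> T) P) C"
  then obtain P T where P: "P \<in> carrier_vec k" and Pn: "((semilin \<theta> T) ^^ n) P = \<alpha> \<cdot>\<^sub>v P"
    and pc: "parity_check_matrix k n (orbit_matrix k n (semilin \<theta> T) P) C" by blast
  have C: "C = {c \<in> carrier_vec n. orbit_matrix k n (semilin \<theta> T) P *\<^sub>v c = 0\<^sub>v k}"
    using pc unfolding parity_check_matrix_def by blast
  show "skew_cyclic \<theta> \<alpha> n C" by (rule bwd[OF assms(1) P n Pn C])
qed

end
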